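(* Suppose $V$ is irreducible and $\bar p$ is the maximizer of $p\mapsto\min_{k}\mathrm{SIR}_k(p)/\gamma_k$ over $\mathcal P$. Then there is $\beta>0$ such that for every $n\in\mathcal N_0(\bar p)$ both $\beta\tilde p=A^{(n)}\tilde p$ with $\tilde p=(\bar p,1)\in\mathbb R_{++}^{K+1}$ and $\beta\bar p=B^{(n)}\bar p$ hold.
   Context: Network model: $K\ge 2$ links, $\mathcal K=\{1,\dots,K\}$. Power constraint set $\mathcal P=\{p\in\mathbb R_+^K: Cp\le\hat p\}$, where $C\in\{0,1\}^{N\times K}$ has at least one entry equal to $1$ in each column and $\hat p=(P_1,\dots,P_N)\in\mathbb R_{++}^N$; $\mathcal N=\{1,\dots,N\}$; $c_n\in\{0,1\}^K$ is the $n$-th row of $C$ (as a column vector) and $g_n(p)=c_n^Tp/P_n$. Gain matrix $V\in\mathbb R_+^{K\times K}$ with zero diagonal, noise vector $z\in\mathbb R_{++}^K$, $\mathrm{SIR}_k(p)=p_k/((Vp)_k+z_k)$. SIR targets $\gamma_k>0$, $\Gamma=\mathrm{diag}(\gamma_1,\dots,\gamma_K)$. For $n\in\mathcal N$: $B^{(n)}=\Gamma V+\frac1{P_n}\Gamma z c_n^T\in\mathbb R_+^{K\times K}$ and $A^{(n)}=\begin{pmatrix}\Gamma V&\Gamma z\\ \frac1{P_n}c_n^T\Gamma V&\frac1{P_n}c_n^T\Gamma z\end{pmatrix}\in\mathbb R_+^{(K+1)\times(K+1)}$. For $p\in\mathbb R_+^K$, $\mathcal N_0(p)=\{n\in\mathcal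 N: g_n(p)=\max_{m\in\mathcal N}g_m(p)=1\}$. *)

theory Defs
  imports Main "HOL-Library.Library"
begin

text \<open>Links are indexed by 0..K-1, constraints by 0..N-1. Vectors are nat => real,
 matrices nat => nat => real; only the indexed entries matter.
 The augmented (K+1)-vectors use index K for the extra coordinate.\<close>

definition matvec :: "nat \<Rightarrow> (nat \<Rightarrow> nat \<Rightarrow> real) \<Rightarrow> (nat \<Rightarrow> real) \<Rightarrow> nat \<Rightarrow> real" where
  "matvec K M x = (\<lambda>i. \<Sum>j<K. M i j * x j)"

definition irreducible_mat :: "nat \<Rightarrow> (nat \<Rightarrow> nat \<Rightarrow> real) \<Rightarrow> bool" where
  "irreducible_mat K M \<longleftrightarrow>
     (\<forall>i<K. \<forall>j<K. (i, j) \<in> trancl {(a, b). a < K \<and> b < K \<and> M a b > 0})"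

definition SIR :: "nat \<Rightarrow> (nat \<Rightarrow> nat \<Rightarrow> real) \<Rightarrow> (nat \<Rightarrow> real) \<Rightarrow> (nat \<Rightarrow> real) \<Rightarrow> nat \<Rightarrow> real" where
  "SIR K V z p k = p k / (matvec K V p k + z k)"

definition power_set :: "nat \<Rightarrow> nat \<Rightarrow> (nat \<Rightarrow> nat \<Rightarrow> real) \<Rightarrow> (nat \<Rightarrow> real) \<Rightarrow> (nat \<Rightarrow> real) set" where
  "power_set K N C P = {p. (\<forall>k<K. 0 \<le> p k) \<and> (\<forall>k\<ge>K. p k = 0) \<and>
                          (\<forall>n<N. (\<Sum>k<K. C n k * p k) \<le> P n)}"

definition min_sir :: "nat \<Rightarrow> (nat \<Rightarrow> nat \<Rightarrow> real) \<Rightarrow> (nat \<Rightarrow> real) \<Rightarrow> (nat \<Rightarrow> real) \<Rightarrow> (nat \<Rightarrow> real) \<Rightarrow> real" where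
  "min_sir K V z \<gamma> p = Min ((\<lambda>k. SIR K V z p k / \<gamma> k) ` {..<K})"

definition gfun :: "nat \<Rightarrow> (nat \<Rightarrow> nat \<Rightarrow> real) \<Rightarrow> (nat \<Rightarrow> real) \<Rightarrow> nat \<Rightarrow> (nat \<Rightarrow> real) \<Rightarrow> real" where
  "gfun K C P n p = (\<Sum>k<K. C n k * p k) / P n"

definition N0 :: "nat \<Rightarrow> nat \<Rightarrow> (nat \<Rightarrow> nat \<Rightarrow> real) \<Rightarrow> (nat \<Rightarrow> real) \<Rightarrow> (nat \<Rightarrow> real) \<Rightarrow> nat set" where
  "N0 K N C P p = {n. n < N \<and> gfun K C P n p = Max ((\<lambda>m. gfun K C P m p) ` {..<N})
                        \<and> gfun K C P n p = 1}"

definition Bmat :: "(nat \<Rightarrow> nat \<Rightarrow> real) \<Rightarrow> (nat \<Rightarrow> real) \<Rightarrow> (nat \<Rightarrow> real) \<Rightarrow> (nat \<Rightarrow> nat \<Rightarrow> real) \<Rightarrow> (nat \<Rightarrow> real) \<Rightarrow> nat \<Rightarrow> nat \<Rightarrow> nat \<Rightarrow> real" where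
  "Bmat V z \<gamma> C P n = (\<lambda>i j. \<gamma> i * V i j + (1 / P n) * (\<gamma> i * z i) * C n j)"

definition Amat :: "nat \<Rightarrow> (nat \<Rightarrow> nat \<Rightarrow> real) \<Rightarrow> (nat \<Rightarrow> real) \<Rightarrow> (nat \<Rightarrow> real) \<Rightarrow> (nat \<Rightarrow> nat \<Rightarrow> real) \<Rightarrow> (nat \<Rightarrow> real) \<Rightarrow> nat \<Rightarrow> nat \<Rightarrow> nat \<Rightarrow> real" where
  "Amat K V z \<gamma> C P n = (\<lambda>i j.
     if i < K \<and> j < K then \<gamma> i * V i j
     else if i < K \<and> j = K then \<gamma> i * z i
     else if i = K \<and> j < K then (1 / P n) * (\<Sum>l<K. C n l * (\<gamma> l * V l j))
     else if i = K \<and> j = K then (1 / P n) * (\<Sum>l<K. C n l * (\<gamma> l * z l))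
     else 0)"

definition augment :: "nat \<Rightarrow> (nat \<Rightarrow> real) \<Rightarrow> nat \<Rightarrow> real" where
  "augment K p = (\<lambda>i. if i < K then p i else if i = K then 1 else 0)"

end

theory Submission
  imports Defs
begin

definition rat :: "nat \<Rightarrow> (nat \<Rightarrow> nat \<Rightarrow> real) \<Rightarrow> (nat \<Rightarrow> real) \<Rightarrow> (nat \<Rightarrow> real) \<Rightarrow> (nat \<Rightarrow> real) \<Rightarrow> nat \<Rightarrow> real" where
  "rat K V z \<gamma> p k = SIR K V z p k / \<gamma> k"

lemma min_sir_le: "k < K \<Longrightarrow> min_sir K V z \<gamma> p \<le> rat K V z \<gamma> p k"
  unfolding min_sir_def rat_def by (rule Min_le) auto

lemma min_sir_ex: "K > 0 \<Longrightarrow> \<exists>k<K. min_sir K V z \<gamma> p = rat K V z \<gamma> p k"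
proof -
  assume "K > 0"
  then have "min_sir K V z \<gamma> p \<in> (\<lambda>k. SIR K V z p k / \<gamma> k) ` {..<K}"
    unfolding min_sir_def by (intro Min_in) auto
  then show ?thesis unfolding rat_def by auto
qed

lemma min_sir_gt: "K > 0 \<Longrightarrow> (\<And>k. k < K \<Longrightarrow> x < rat K V z \<gamma> p k) \<Longrightarrow> x < min_sir K V z \<gamma> p"
  using min_sir_ex by metis

lemma den_pos:
  assumes "\<forall>i<K. \<forall>j<K. V i j \<ge> 0" "\<forall>k<K. z k > 0" "\<forall>k<K. 0 \<le> p k" "k < K"
  shows "matvec K V p k + z k > 0"
proof -
  have "matvec K V p k \<ge> 0" unfolding matvec_def using assms by (auto intro!: sum_nonneg)
  then show ?thesis using assms by auto
qed

lemma trancl_cross: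
  assumes "(x, y) \<in> trancl E" "x \<in> S" "y \<notin> S"
  shows "\<exists>a b. (a, b) \<in> E \<and> a \<in> S \<and> b \<notin> S"
  using assms
proof (induction rule: trancl_induct)
  case (base y) then show ?case by blast
next
  case (step y w)
  then show ?case by (cases "y \<in> S") blast+
qed

lemma step:
  assumes K0: "K > 0"
    and C01: "\<forall>n<N. \<forall>k<K. C n k = 0 \<or> C n k = 1"
    and Vnonneg: "\<forall>i<K. \<forall>j<K. V i j \<ge> 0"
    and zpos: "\<forall>k<K. z k > 0"
    and gpos: "\<forall>k<K. \<gamma> k > 0"
    and Virr: "irreducible_mat K V"
    and cpos: "c > 0"
    and pin: "p \<in> power_set K N C P"
    and pge: "\<forall>k<K. rat K V z \<gamma> p k \<ge> c"
    and Sne: "{k. k<K \<and> rat K V z \<gamma> p k = c} \<noteq> {}"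
    and Snall: "{k. k<K \<and> rat K V z \<gamma> p k = c} \<noteq> {..<K}"
  shows "\<exists>p'\<in>power_set K N C P. (\<forall>k<K. rat K V z \<gamma> p' k \<ge> c) \<and>
     {k. k<K \<and> rat K V z \<gamma> p' k = c} \<subset> {k. k<K \<and> rat K V z \<gamma> p k = c}"
proof -
  define S where "S = {k. k<K \<and> rat K V z \<gamma> p k = c}"
  define T where "T = {k. k<K \<and> rat K V z \<gamma> p k \<noteq> c}"
  have p0: "\<forall>k<K. 0 \<le> p k" and pK: "\<forall>k\<ge>K. p k = 0"
    and pC: "\<forall>n<N. (\<Sum>k<K. C n k * p k) \<le> P n" using pin unfolding power_set_def by auto
  have den: "\<And>k. k < K \<Longrightarrow> matvec K V p k + z k > 0" using den_pos Vnonneg zpos p0 by blast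
  have rpos: "\<And>k. k < K \<Longrightarrow> rat K V z \<gamma> p k > 0" using pge cpos by force
  have ppos: "\<And>k. k < K \<Longrightarrow> p k > 0"
  proof -
    fix k assume k: "k < K"
    have "SIR K V z p k > 0" using rpos[OF k] gpos k unfolding rat_def
      by (force simp add: zero_less_divide_iff)
    then show "p k > 0" using den[OF k] unfolding SIR_def by (simp add: zero_less_divide_iff)
  qed
  obtain a0 where a0: "a0 \<in> S" using Sne S_def by auto
  obtain b0 where b0: "b0 < K" "b0 \<notin> S" using Snall S_def by auto
  have "(a0, b0) \<in> trancl {(a, b). a < K \<and> b < K \<and> V a b > 0}"
    using Virr a0 b0 S_def unfolding irreducible_mat_def by auto
  then obtain a b where ab: "a < K" "b < K" "V a b > 0" "a \<in> S" "b \<notin> S"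
    using trancl_cross[OF _ a0 b0(2)] by blast
  have bT: "b \<in> T" using ab S_def T_def by auto
  have rT: "\<And>k. k \<in> T \<Longrightarrow> rat K V z \<gamma> p k > c" using pge T_def by force
  have finT: "finite T" unfolding T_def by auto
  define m where "m = Max ((\<lambda>k. c / rat K V z \<gamma> p k) ` T)"
  have qlt: "\<And>k. k \<in> T \<Longrightarrow> c / rat K V z \<gamma> p k < 1"
    using rT cpos by (simp add: divide_less_eq)
  have mlt: "m < 1" unfolding m_def using finT bT qlt by (subst Max_less_iff) auto
  have mge: "\<And>k. k \<in> T \<Longrightarrow> c / rat K V z \<gamma> p k \<le> m" unfolding m_def using finT by (intro Max_ge) auto
  define \<theta> where "\<theta> = (1 + m) / 2"
  have th1: "\<theta> < 1" using mlt \<theta>_def by auto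
  have thT: "\<And>k. k \<in> T \<Longrightarrow> c / rat K V z \<gamma> p k < \<theta>" unfolding \<theta>_def proof -
    fix k assume "k \<in> T" then have "c / rat K V z \<gamma> p k \<le> m" by (rule mge)
    moreover have "m < (1 + m) / 2" using mlt by simp
    ultimately show "c / rat K V z \<gamma> p k < (1 + m) / 2" by (rule le_less_trans)
  qed
  have th0: "\<theta> > 0" using thT[OF bT] rpos[OF ab(2)] cpos by (smt (verit) divide_pos_pos)
  define p' where "p' = (\<lambda>k. if k \<in> T then \<theta> * p k else p k)"
  have p'0: "\<And>k. k < K \<Longrightarrow> 0 \<le> p' k" using p0 th0 p'_def by auto
  have p'le: "\<And>k. k < K \<Longrightarrow> p' k \<le> p k" using p0 th1 th0 p'_def
    by (auto intro!: mult_left_le_one_le)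
  have p'K: "\<forall>k\<ge>K. p' k = 0" using pK p'_def T_def by auto
  have C0: "\<And>n k. n < N \<Longrightarrow> k < K \<Longrightarrow> C n k \<ge> 0" using C01 by force
  have p'in: "p' \<in> power_set K N C P"
    unfolding power_set_def
  proof (intro CollectI conjI allI impI)
    fix n assume n: "n < N"
    have "(\<Sum>k<K. C n k * p' k) \<le> (\<Sum>k<K. C n k * p k)"
      by (rule sum_mono) (use C0 n p'le in \<open>auto intro: mult_left_mono\<close>)
    then show "(\<Sum>k<K. C n k * p' k) \<le> P n" using pC n by auto
  qed (use p'0 p'K in auto)
  have mv_le: "\<And>k. k < K \<Longrightarrow> matvec K V p' k \<le> matvec K V p k"
    unfolding matvec_def by (rule sum_mono) (use Vnonneg p'le in \<open>auto intro: mult_left_mono\<close>)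
  have mv_lt: "matvec K V p' a < matvec K V p a"
    unfolding matvec_def
  proof (rule sum_strict_mono_ex1)
    show "\<forall>j\<in>{..<K}. V a j * p' j \<le> V a j * p j"
      using Vnonneg p'le ab by (auto intro: mult_left_mono)
    have "p' b < p b" using bT p'_def th1 ppos[OF ab(2)] by auto
    then show "\<exists>j\<in>{..<K}. V a j * p' j < V a j * p j" using ab by (intro bexI[of _ b]) auto
  qed auto
  have den': "\<And>k. k < K \<Longrightarrow> matvec K V p' k + z k > 0" using den_pos Vnonneg zpos p'0 by blast
  have rT': "\<And>k. k \<in> T \<Longrightarrow> rat K V z \<gamma> p' k > c"
  proof -
    fix k assume kT: "k \<in> T"
    then have k: "k < K" using T_def by auto
    have "SIR K V z p' k = \<theta> * p k / (matvec K V p' k + z k)" using kT p'_def SIR_def by simp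
    also have "\<dots> \<ge> \<theta> * p k / (matvec K V p k + z k)"
      using den'[OF k] mv_le[OF k] th0 p0 k by (intro divide_left_mono) auto
    finally have "SIR K V z p' k \<ge> \<theta> * SIR K V z p k" unfolding SIR_def by simp
    then have "SIR K V z p' k / \<gamma> k \<ge> \<theta> * SIR K V z p k / \<gamma> k"
      using gpos k by (intro divide_right_mono) auto
    then have "rat K V z \<gamma> p' k \<ge> \<theta> * rat K V z \<gamma> p k"
      unfolding rat_def by simp
    moreover have "\<theta> * rat K V z \<gamma> p k > c" using thT[OF kT] rpos[OF k] by (simp add: divide_less_eq)
    ultimately show "rat K V z \<gamma> p' k > c" by linarith
  qed
  have rS': "\<And>k. k < K \<Longrightarrow> k \<notin> T \<Longrightarrow> rat K V z \<gamma> p' k \<ge> rat K V z \<gamma> p k"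
  proof -
    fix k assume k: "k < K" and kT: "k \<notin> T"
    have "SIR K V z p' k = p k / (matvec K V p' k + z k)" using kT p'_def SIR_def by simp
    also have "\<dots> \<ge> p k / (matvec K V p k + z k)"
      using den'[OF k] mv_le[OF k] p0 k by (intro divide_left_mono) auto
    finally have "SIR K V z p' k \<ge> SIR K V z p k" unfolding SIR_def .
    then show "rat K V z \<gamma> p' k \<ge> rat K V z \<gamma> p k"
      unfolding rat_def using gpos k by (intro divide_right_mono) auto
  qed
  have ra: "rat K V z \<gamma> p' a > c"
  proof -
    have aT: "a \<notin> T" using ab S_def T_def by auto
    have "SIR K V z p' a = p a / (matvec K V p' a + z a)" using aT p'_def SIR_def by simp
    also have "\<dots> > p a / (matvec K V p a + z a)"
      using den'[OF ab(1)] mv_lt ppos[OF ab(1)] by (intro divide_strict_left_mono) auto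
    finally have "SIR K V z p' a > SIR K V z p a" unfolding SIR_def .
    then have "rat K V z \<gamma> p' a > rat K V z \<gamma> p a"
      unfolding rat_def using gpos ab(1) by (intro divide_strict_right_mono) auto
    then show ?thesis using ab S_def by auto
  qed
  have ge': "\<forall>k<K. rat K V z \<gamma> p' k \<ge> c"
  proof (intro allI impI)
    fix k assume k: "k < K"
    show "rat K V z \<gamma> p' k \<ge> c"
    proof (cases "k \<in> T")
      case True then show ?thesis using rT' by force
    next
      case False then show ?thesis using rS'[OF k False] pge k by force
    qed
  qed
  have sub: "{k. k<K \<and> rat K V z \<gamma> p' k = c} \<subset> S"
  proof
    show "{k. k<K \<and> rat K V z \<gamma> p' k = c} \<subseteq> S"
      using rT' unfolding S_def T_def by force
    show "{k. k<K \<and> rat K V z \<gamma> p' k = c} \<noteq> S" using ra ab by auto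
  qed
  show ?thesis using p'in ge' sub S_def by blast
qed

theorem lemma3:
  fixes K N :: nat
    and C V :: "nat \<Rightarrow> nat \<Rightarrow> real"
    and P z \<gamma> pbar :: "nat \<Rightarrow> real"
  assumes K2: "K \<ge> 2"
    and C01: "\<forall>n<N. \<forall>k<K. C n k = 0 \<or> C n k = 1"
    and Ccol: "\<forall>k<K. \<exists>n<N. C n k = 1"
    and Ppos: "\<forall>n<N. P n > 0"
    and Vnonneg: "\<forall>i<K. \<forall>j<K. V i j \<ge> 0"
    and Vdiag: "\<forall>k<K. V k k = 0"
    and zpos: "\<forall>k<K. z k > 0"
    and gpos: "\<forall>k<K. \<gamma> k > 0"
    and Virr: "irreducible_mat K V"
    and pbar_in: "pbar \<in> power_set K N C P"
    and pbar_max: "\<forall>p\<in>power_set K N C P. min_sir K V z \<gamma> p \<le> min_sir K V z \<gamma> pbar"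
  shows "(\<forall>k<K. pbar k > 0) \<and>
    (\<exists>\<beta>>0. \<forall>n\<in>N0 K N C P pbar.
       (\<forall>i\<le>K. \<beta> * augment K pbar i = matvec (K + 1) (Amat K V z \<gamma> C P n) (augment K pbar) i) \<and>
       (\<forall>i<K. \<beta> * pbar i = matvec K (Bmat V z \<gamma> C P n) pbar i))"
proof -
  have K0: "K > 0" using K2 by auto
  obtain n0 where n0: "n0 < N" using Ccol K0 by blast
  define c where "c = min_sir K V z \<gamma> pbar"
  have p0: "\<forall>k<K. 0 \<le> pbar k" using pbar_in unfolding power_set_def by auto
  have C0: "\<And>n k. n < N \<Longrightarrow> k < K \<Longrightarrow> C n k \<ge> 0" using C01 by force
  have C1: "\<And>n k. n < N \<Longrightarrow> k < K \<Longrightarrow> C n k \<le> 1" using C01 by force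
  have cpos: "c > 0"
  proof -
    define \<delta> where "\<delta> = Min (P ` {..<N}) / real K"
    have Pmin: "Min (P ` {..<N}) > 0" using n0 Ppos by (subst Min_gr_iff) auto
    have dpos: "\<delta> > 0" using Pmin K0 \<delta>_def by auto
    define q where "q = (\<lambda>k. if k < K then \<delta> else 0)"
    have q0: "\<forall>k<K. 0 \<le> q k" using dpos q_def by auto
    have qin: "q \<in> power_set K N C P"
      unfolding power_set_def
    proof (intro CollectI conjI allI impI)
      fix n assume n: "n < N"
      have "(\<Sum>k<K. C n k * q k) \<le> (\<Sum>k<K. \<delta>)"
        by (rule sum_mono) (use C1 n dpos q_def in auto)
      also have "\<dots> = Min (P ` {..<N})" using K0 \<delta>_def by simp
      also have "\<dots> \<le> P n" using n by (intro Min_le) auto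
      finally show "(\<Sum>k<K. C n k * q k) \<le> P n" .
    qed (use q0 q_def in auto)
    have "0 < min_sir K V z \<gamma> q"
    proof (rule min_sir_gt[OF K0])
      fix k assume k: "k < K"
      have "matvec K V q k + z k > 0" using den_pos[OF Vnonneg zpos q0 k] .
      then show "0 < rat K V z \<gamma> q k" unfolding rat_def SIR_def
        using k q_def dpos gpos by (simp add: divide_pos_pos)
    qed
    then show ?thesis using pbar_max qin c_def by force
  qed
  have bal_all: "\<And>m p. p \<in> power_set K N C P \<Longrightarrow> (\<forall>k<K. rat K V z \<gamma> p k \<ge> c) \<Longrightarrow>
      card {k. k<K \<and> rat K V z \<gamma> p k = c} = m \<Longrightarrow> {k. k<K \<and> rat K V z \<gamma> p k = c} = {..<K}"
  proof -
    fix m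
    show "\<And>p. p \<in> power_set K N C P \<Longrightarrow> (\<forall>k<K. rat K V z \<gamma> p k \<ge> c) \<Longrightarrow>
      card {k. k<K \<and> rat K V z \<gamma> p k = c} = m \<Longrightarrow> {k. k<K \<and> rat K V z \<gamma> p k = c} = {..<K}"
    proof (induction m rule: less_induct)
      case (less m p)
      show ?case
      proof (rule ccontr)
        assume nall: "{k. k<K \<and> rat K V z \<gamma> p k = c} \<noteq> {..<K}"
        show False
        proof (cases "{k. k<K \<and> rat K V z \<gamma> p k = c} = {}")
          case True
          have "c < min_sir K V z \<gamma> p"
          proof (rule min_sir_gt[OF K0])
            fix k assume k: "k < K"
            then show "c < rat K V z \<gamma> p k" using less.prems(2) True by force
          qed
          then show False using pbar_max less.prems(1) c_def by force
        next
          case False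
          obtain p' where p': "p' \<in> power_set K N C P" "\<forall>k<K. rat K V z \<gamma> p' k \<ge> c"
            "{k. k<K \<and> rat K V z \<gamma> p' k = c} \<subset> {k. k<K \<and> rat K V z \<gamma> p k = c}"
            using step[OF K0 C01 Vnonneg zpos gpos Virr cpos less.prems(1,2) False nall] by blast
          have "card {k. k<K \<and> rat K V z \<gamma> p' k = c} < m"
            using less.prems(3) psubset_card_mono[OF _ p'(3)] by auto
          then have "{k. k<K \<and> rat K V z \<gamma> p' k = c} = {..<K}"
            using less.IH p'(1,2) by blast
          then show False using p'(3) by auto
        qed
      qed
    qed
  qed
  have "{k. k<K \<and> rat K V z \<gamma> pbar k = c} = {..<K}"
    using bal_all[OF pbar_in _ refl] min_sir_le c_def by blast
  then have bal: "\<And>k. k < K \<Longrightarrow> rat K V z \<gamma> pbar k = c" by auto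
  have key: "\<And>i. i < K \<Longrightarrow> pbar i / c = \<gamma> i * matvec K V pbar i + \<gamma> i * z i"
  proof -
    fix i assume i: "i < K"
    have d: "matvec K V pbar i + z i > 0" using den_pos[OF Vnonneg zpos p0 i] .
    have g: "\<gamma> i > 0" using gpos i by auto
    have "pbar i / (matvec K V pbar i + z i) / \<gamma> i = c" using bal[OF i] unfolding rat_def SIR_def .
    then have "pbar i / ((matvec K V pbar i + z i) * \<gamma> i) = c" by (simp only: divide_divide_eq_left)
    moreover have "(matvec K V pbar i + z i) * \<gamma> i \<noteq> 0" using d g by simp
    ultimately have "pbar i = c * ((matvec K V pbar i + z i) * \<gamma> i)" by (simp add: divide_eq_eq)
    then have "pbar i = c * \<gamma> i * (matvec K V pbar i + z i)" by (simp add: algebra_simps)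
    then show "pbar i / c = \<gamma> i * matvec K V pbar i + \<gamma> i * z i" using cpos
      by (simp add: field_simps)
  qed
  have ppos: "\<forall>k<K. pbar k > 0"
  proof (intro allI impI)
    fix k assume k: "k < K"
    have "matvec K V pbar k \<ge> 0" unfolding matvec_def using Vnonneg p0 k by (auto intro!: sum_nonneg)
    then have "pbar k / c > 0" using key[OF k] gpos zpos k
      by (smt (verit, best) mult_nonneg_nonneg mult_pos_pos)
    then show "pbar k > 0" using cpos by (simp add: zero_less_divide_iff)
  qed
  have eqs: "\<forall>n\<in>N0 K N C P pbar.
       (\<forall>i\<le>K. (1/c) * augment K pbar i = matvec (K + 1) (Amat K V z \<gamma> C P n) (augment K pbar) i) \<and>
       (\<forall>i<K. (1/c) * pbar i = matvec K (Bmat V z \<gamma> C P n) pbar i)"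
  proof
    fix n assume "n \<in> N0 K N C P pbar"
    then have n: "n < N" and g1: "gfun K C P n pbar = 1" unfolding N0_def by auto
    have Pn: "P n > 0" using Ppos n by auto
    have sumC: "(\<Sum>k<K. C n k * pbar k) = P n" using g1 Pn unfolding gfun_def by (simp add: divide_eq_1_iff)
    have B: "\<And>i. i < K \<Longrightarrow> (1/c) * pbar i = matvec K (Bmat V z \<gamma> C P n) pbar i"
    proof -
      fix i assume i: "i < K"
      have "matvec K (Bmat V z \<gamma> C P n) pbar i
          = \<gamma> i * (\<Sum>j<K. V i j * pbar j) + (1 / P n) * (\<gamma> i * z i) * (\<Sum>j<K. C n j * pbar j)"
        unfolding matvec_def Bmat_def
        by (simp add: algebra_simps sum.distrib sum_distrib_left)
      also have "\<dots> = \<gamma> i * matvec K V pbar i + \<gamma> i * z i" using sumC Pn unfolding matvec_def by simp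
      finally show "(1/c) * pbar i = matvec K (Bmat V z \<gamma> C P n) pbar i" using key[OF i] by simp
    qed
    have A: "\<And>i. i \<le> K \<Longrightarrow> (1/c) * augment K pbar i = matvec (K + 1) (Amat K V z \<gamma> C P n) (augment K pbar) i"
    proof -
      fix i assume i: "i \<le> K"
      have split: "matvec (K + 1) (Amat K V z \<gamma> C P n) (augment K pbar) i
         = (\<Sum>j<K. Amat K V z \<gamma> C P n i j * pbar j) + Amat K V z \<gamma> C P n i K"
        unfolding matvec_def by (simp add: augment_def)
      show "(1/c) * augment K pbar i = matvec (K + 1) (Amat K V z \<gamma> C P n) (augment K pbar) i"
      proof (cases "i < K")
        case True
        have "(\<Sum>j<K. Amat K V z \<gamma> C P n i j * pbar j) = \<gamma> i * matvec K V pbar i"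
          unfolding Amat_def matvec_def using True by (simp add: sum_distrib_left algebra_simps)
        moreover have "Amat K V z \<gamma> C P n i K = \<gamma> i * z i" unfolding Amat_def using True by simp
        ultimately show ?thesis using split key[OF True] True by (simp add: augment_def)
      next
        case False
        then have iK: "i = K" using i by auto
        have "(\<Sum>j<K. Amat K V z \<gamma> C P n i j * pbar j)
            = (1 / P n) * (\<Sum>j<K. \<Sum>l<K. C n l * (\<gamma> l * V l j) * pbar j)"
          unfolding Amat_def using iK by (simp add: sum_distrib_left sum_distrib_right algebra_simps)
        also have "\<dots> = (1 / P n) * (\<Sum>l<K. C n l * (\<gamma> l * matvec K V pbar l))"
          unfolding matvec_def by (subst sum.swap) (simp add: sum_distrib_left algebra_simps)
        finally have s1: "(\<Sum>j<K. Amat K V z \<gamma> C P n i j * pbar j)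
            = (1 / P n) * (\<Sum>l<K. C n l * (\<gamma> l * matvec K V pbar l))" .
        have s2: "Amat K V z \<gamma> C P n i K = (1 / P n) * (\<Sum>l<K. C n l * (\<gamma> l * z l))"
          unfolding Amat_def using iK by simp
        have "matvec (K + 1) (Amat K V z \<gamma> C P n) (augment K pbar) i
           = (1 / P n) * (\<Sum>l<K. C n l * (\<gamma> l * matvec K V pbar l + \<gamma> l * z l))"
          using split s1 s2 by (simp add: sum.distrib algebra_simps)
        also have "\<dots> = (1 / P n) * (\<Sum>l<K. C n l * (pbar l / c))"
          using key by simp
        also have "\<dots> = (1 / P n) * (1/c) * (\<Sum>l<K. C n l * pbar l)"
          by (simp add: sum_distrib_left algebra_simps)
        also have "\<dots> = 1/c" using sumC Pn by simp
        finally show ?thesis using iK by (simp add: augment_def)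
      qed
    qed
    show "(\<forall>i\<le>K. (1/c) * augment K pbar i = matvec (K + 1) (Amat K V z \<gamma> C P n) (augment K pbar) i) \<and>
       (\<forall>i<K. (1/c) * pbar i = matvec K (Bmat V z \<gamma> C P n) pbar i)" using A B by blast
  qed
  have "1/c > 0" using cpos by simp
  then show ?thesis using ppos eqs by blast
qed

end
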